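(* Let $m\ge2$ and $n\ge m$. For every real $\beta>0$, there is no proportional mechanism $(A,q)$ for the goods allocation problem over the set $\mathcal{C}=\mathbb{R}_{\ge0}^{m\times n}$ of general instances such that $\beta\cdot\min_{i\in[m]}v_i(A(v)_i)\ge\mathrm{OPT}(v)$ for every $v\in\mathcal{C}$.
   Context: Goods allocation: $m$ agents $[m]$, $n$ goods $[n]$; an instance is a matrix $v\in\mathbb{R}_{\ge0}^{m\times n}$, $v_{i,j}$ the value of agent $i$ for good $j$, $v_i(S)=\sum_{j\in S}v_{i,j}$. An allocation is a tuple of pairwise disjoint subsets of $[n]$ with union $[n]$. A mechanism $(A,q)$ over $\mathcal{I}$ assigns to each $v$ an allocation $A(v)$ and transfers $q(v)\in\mathbb{R}^m$ (written $A_i,q_i$); it is proportional if for every $v\in\mathcal{I}$ and $i\in[m]$: $v_i(A_i)-q_i\ge\frac1m\sum_{j\in[m]}(v_i(A_j)-q_j)$. $\mathrm{OPT}(v)=\max_X\min_{i\in[m]}v_i(X_i)$ over all allocations $X$ (optimal egalitarian welfare). *)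

theory Defs
  imports "HOL-Analysis.Analysis"
begin

text \<open>Agents are 0..m-1, goods are 0..n-1. An instance is a matrix
  v :: nat => nat => real, with v i j the value of agent i for good j;
  entries outside the index range are fixed to 0 so instances correspond
  exactly to nonnegative m x n matrices.\<close>

definition general_instances :: "nat \<Rightarrow> nat \<Rightarrow> (nat \<Rightarrow> nat \<Rightarrow> real) set" where
  "general_instances m n = {v. \<forall>i j. (i < m \<and> j < n \<longrightarrow> 0 \<le> v i j) \<and>
                                   (\<not> (i < m \<and> j < n) \<longrightarrow> v i j = 0)}"

definition val :: "(nat \<Rightarrow> nat \<Rightarrow> real) \<Rightarrow> nat \<Rightarrow> nat set \<Rightarrow> real" where
  "val v i S = (\<Sum>j\<in>S. v i j)"

definition is_allocation :: "nat \<Rightarrow> nat \<Rightarrow> (nat \<Rightarrow> nat set) \<Rightarrow> bool" where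
  "is_allocation m n X \<longleftrightarrow>
     (\<forall>i<m. X i \<subseteq> {..<n}) \<and>
     (\<forall>i<m. \<forall>k<m. i \<noteq> k \<longrightarrow> X i \<inter> X k = {}) \<and>
     (\<Union>i<m. X i) = {..<n}"

definition OPT :: "nat \<Rightarrow> nat \<Rightarrow> (nat \<Rightarrow> nat \<Rightarrow> real) \<Rightarrow> real" where
  "OPT m n v = Max ((\<lambda>X. Min ((\<lambda>i. val v i (X i)) ` {..<m}))
                     ` {X. is_allocation m n X \<and> (\<forall>i. i \<ge> m \<longrightarrow> X i = {})})"

definition is_mechanism ::
  "nat \<Rightarrow> nat \<Rightarrow> (nat \<Rightarrow> nat \<Rightarrow> real) set \<Rightarrow>
   ((nat \<Rightarrow> nat \<Rightarrow> real) \<Rightarrow> nat \<Rightarrow> nat set) \<Rightarrow> bool" where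
  "is_mechanism m n I A \<longleftrightarrow> (\<forall>v\<in>I. is_allocation m n (A v))"

definition proportional ::
  "nat \<Rightarrow> nat \<Rightarrow> (nat \<Rightarrow> nat \<Rightarrow> real) set \<Rightarrow>
   ((nat \<Rightarrow> nat \<Rightarrow> real) \<Rightarrow> nat \<Rightarrow> nat set) \<Rightarrow>
   ((nat \<Rightarrow> nat \<Rightarrow> real) \<Rightarrow> nat \<Rightarrow> real) \<Rightarrow> bool" where
  "proportional m n I A q \<longleftrightarrow>
     (\<forall>v\<in>I. \<forall>i<m. val v i (A v i) - q v i \<ge>
         (1 / real m) * (\<Sum>j<m. val v i (A v j) - q v j))"

end

theory Submission
  imports Defs
begin

theorem mainTheorem8:
  fixes m n :: nat and \<beta> :: real
  assumes "m \<ge> 2" and "n \<ge> m" and "\<beta> > 0"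
  shows "\<not> (\<exists>A q. is_mechanism m n (general_instances m n) A \<and>
               proportional m n (general_instances m n) A q \<and>
               (\<forall>v\<in>general_instances m n.
                  \<beta> * Min ((\<lambda>i. val v i (A v i)) ` {..<m}) \<ge> OPT m n v))"
proof
  assume "\<exists>A q. is_mechanism m n (general_instances m n) A \<and>
               proportional m n (general_instances m n) A q \<and>
               (\<forall>v\<in>general_instances m n.
                  \<beta> * Min ((\<lambda>i. val v i (A v i)) ` {..<m}) \<ge> OPT m n v)"
  then obtain A q where mech: "is_mechanism m n (general_instances m n) A"
    and propo: "proportional m n (general_instances m n) A q"
    and apx: "\<forall>v\<in>general_instances m n.
                  \<beta> * Min ((\<lambda>i. val v i (A v i)) ` {..<m}) \<ge> OPT m n v" by blast
  define L :: real where "L = real m * real m"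
  define v :: "nat \<Rightarrow> nat \<Rightarrow> real" where "v = (\<lambda>i j.
     (if i=0 \<and> j=0 then 1 else 0) + (if i=0 \<and> j=1 then L else 0) + (if 0<i \<and> i<m \<and> j=i then 1 else 0))"
  have L0: "L \<ge> 0" unfolding L_def by simp
  have vI: "v \<in> general_instances m n"
    using assms L0 unfolding general_instances_def v_def by auto
  have alloc: "is_allocation m n (A v)" using mech vI unfolding is_mechanism_def by blast
  have sub: "\<And>i. i < m \<Longrightarrow> A v i \<subseteq> {..<n}" using alloc unfolding is_allocation_def by blast
  have fin: "\<And>i. i < m \<Longrightarrow> finite (A v i)" using sub finite_subset by blast
  have disj: "\<And>i k. i<m \<Longrightarrow> k<m \<Longrightarrow> i\<noteq>k \<Longrightarrow> A v i \<inter> A v k = {}"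
    using alloc unfolding is_allocation_def by blast
  have un: "(\<Union>i<m. A v i) = {..<n}" using alloc unfolding is_allocation_def by blast
  have vnn: "\<And>i j. v i j \<ge> 0" using L0 unfolding v_def by auto
  have vali: "\<And>i S. 0 < i \<Longrightarrow> i < m \<Longrightarrow> finite S \<Longrightarrow> val v i S = (if i \<in> S then 1 else 0)"
  proof -
    fix i S assume h: "0 < (i::nat)" "i < m" "finite (S::nat set)"
    have "val v i S = (\<Sum>j\<in>S. if j = i then 1 else 0)"
      unfolding val_def v_def using h by (intro sum.cong) auto
    also have "\<dots> = (if i \<in> S then 1 else 0)" using h(3) by (simp add: sum.delta')
    finally show "val v i S = (if i \<in> S then 1 else 0)" .
  qed
  have val0n: "val v 0 {..<n} = 1 + L"
  proof -
    have "val v 0 {..<n} = (\<Sum>j<n. (if j=0 then 1 else 0) + (if j = 1 then L else 0))"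
      unfolding val_def v_def by (intro sum.cong) auto
    also have "\<dots> = 1 + L" using assms by (simp add: sum.distrib)
    finally show ?thesis .
  qed
  define X :: "nat \<Rightarrow> nat set" where "X = (\<lambda>i. if i = 0 then {0} \<union> {m..<n} else if i < m then {i} else {})"
  have Xa: "is_allocation m n X \<and> (\<forall>i. i \<ge> m \<longrightarrow> X i = {})"
  proof -
    have "(\<Union>i<m. X i) = {..<n}"
    proof
      show "(\<Union>i<m. X i) \<subseteq> {..<n}" using assms unfolding X_def by auto
      show "{..<n} \<subseteq> (\<Union>i<m. X i)"
      proof
        fix j assume "j \<in> {..<n}"
        show "j \<in> (\<Union>i<m. X i)"
        proof (cases "j < m")
          case True thus ?thesis unfolding X_def by (cases "j = 0") auto
        next
          case False thus ?thesis using assms \<open>j \<in> {..<n}\<close> unfolding X_def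
            by (intro UN_I[of 0]) auto
        qed
      qed
    qed
    moreover have "\<forall>i<m. X i \<subseteq> {..<n}" using assms unfolding X_def by auto
    moreover have "\<forall>i<m. \<forall>k<m. i \<noteq> k \<longrightarrow> X i \<inter> X k = {}"
      unfolding X_def by auto
    moreover have "\<forall>i. i \<ge> m \<longrightarrow> X i = {}" using assms unfolding X_def by auto
    ultimately show ?thesis unfolding is_allocation_def by blast
  qed
  have valX: "\<And>i. i < m \<Longrightarrow> val v i (X i) = 1"
  proof -
    fix i assume i: "i < m"
    show "val v i (X i) = 1"
    proof (cases "i = 0")
      case True
      have "val v i (X i) = (\<Sum>j\<in>{0} \<union> {m..<n}. if j = 0 then 1 else 0)"
        unfolding val_def v_def X_def using True assms by (intro sum.cong) auto
      also have "\<dots> = 1" by (subst sum.delta) auto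
      finally show ?thesis .
    next
      case False thus ?thesis using i vali[of i "{i}"] unfolding X_def by simp
    qed
  qed
  have minX: "Min ((\<lambda>i. val v i (X i)) ` {..<m}) = 1"
  proof -
    have "(\<lambda>i. val v i (X i)) ` {..<m} = (\<lambda>i. 1) ` {..<m}" using valX by (intro image_cong) auto
    also have "\<dots> = {1}" using assms by (intro image_constant[of 0]) auto
    finally have "(\<lambda>i. val v i (X i)) ` {..<m} = {1}" .
    thus ?thesis by simp
  qed
  define AL where "AL = {X. is_allocation m n X \<and> (\<forall>i. i \<ge> m \<longrightarrow> X i = {})}"
  have finAL: "finite AL"
  proof -
    have "AL \<subseteq> (\<lambda>f i. if i < m then f i else {}) ` ({..<m} \<rightarrow>\<^sub>E Pow {..<n})"
    proof
      fix Y assume Y: "Y \<in> AL"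
      have "Y = (\<lambda>i. if i < m then restrict Y {..<m} i else {})"
        using Y unfolding AL_def by (auto simp: fun_eq_iff)
      moreover have "restrict Y {..<m} \<in> {..<m} \<rightarrow>\<^sub>E Pow {..<n}"
        using Y unfolding AL_def is_allocation_def by auto
      ultimately show "Y \<in> (\<lambda>f i. if i < m then f i else {}) ` ({..<m} \<rightarrow>\<^sub>E Pow {..<n})"
        by blast
    qed
    thus ?thesis by (rule finite_subset) (auto intro: finite_PiE)
  qed
  have OPT1: "OPT m n v \<ge> 1"
    unfolding OPT_def
    using finAL Xa minX unfolding AL_def
    by (intro Max_ge_iff[THEN iffD2]) force+
  have "\<beta> * Min ((\<lambda>i. val v i (A v i)) ` {..<m}) \<ge> 1" using apx vI OPT1 by force
  hence Minpos: "Min ((\<lambda>i. val v i (A v i)) ` {..<m}) > 0" using assms(3)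
    by (metis mult_le_0_iff not_le zero_less_one order_less_le_trans less_le_not_le)
  have pos: "\<And>i. i < m \<Longrightarrow> val v i (A v i) > 0"
  proof -
    fix i assume "i < m"
    hence "Min ((\<lambda>i. val v i (A v i)) ` {..<m}) \<le> val v i (A v i)" by (intro Min_le) auto
    thus "val v i (A v i) > 0" using Minpos by linarith
  qed
  have m1: "1 < m" using assms by simp
  have in1: "1 \<in> A v 1" using pos[OF m1] vali[of 1 "A v 1"] fin[OF m1] m1 by (auto split: if_splits)
  have not1: "1 \<notin> A v 0" using disj[of 0 1] m1 in1 by auto
  have A0le: "val v 0 (A v 0) \<le> 1"
  proof -
    have "val v 0 (insert 1 (A v 0)) \<le> val v 0 {..<n}"
      unfolding val_def using sub[of 0] m1 assms vnn by (intro sum_mono2) auto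
    moreover have "val v 0 (insert 1 (A v 0)) = L + val v 0 (A v 0)"
      unfolding val_def using not1 fin[of 0] m1 by (simp add: v_def)
    ultimately show ?thesis using val0n by simp
  qed
  have Aile: "\<And>i. i < m \<Longrightarrow> val v i (A v i) \<le> 1"
  proof -
    fix i assume i: "i < m"
    show "val v i (A v i) \<le> 1"
      using A0le vali[of i "A v i"] fin[OF i] i by (cases "i = 0") auto
  qed
  have upper: "(\<Sum>i<m. val v i (A v i)) \<le> real m"
    using sum_mono[of "{..<m}" "\<lambda>i. val v i (A v i)" "\<lambda>_. 1"] Aile by simp
  have part: "\<And>i. (\<Sum>j<m. val v i (A v j)) = val v i {..<n}"
  proof -
    fix i
    have "val v i {..<n} = sum (v i) (\<Union>j<m. A v j)" unfolding val_def un ..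
    also have "\<dots> = (\<Sum>j<m. sum (v i) (A v j))"
      using fin disj by (intro sum.UNION_disjoint) auto
    finally show "(\<Sum>j<m. val v i (A v j)) = val v i {..<n}" unfolding val_def by simp
  qed
  have totn: "(\<Sum>i<m. val v i {..<n}) = 1 + L + real (m - 1)"
  proof -
    have "(\<Sum>i<m. val v i {..<n}) = (\<Sum>i\<in>insert 0 {1..<m}. val v i {..<n})"
      using m1 by (intro sum.cong) auto
    also have "\<dots> = val v 0 {..<n} + (\<Sum>i\<in>{1..<m}. val v i {..<n})" by simp
    also have "(\<Sum>i\<in>{1..<m}. val v i {..<n}) = (\<Sum>i\<in>{1..<m}. 1)"
      using assms by (intro sum.cong) (auto simp: vali)
    finally show ?thesis using val0n by simp
  qed
  define Q where "Q = (\<Sum>j<m. q v j)"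
  have ineq: "\<And>i. i < m \<Longrightarrow> val v i (A v i) - q v i \<ge> (1 / real m) * (val v i {..<n} - Q)"
  proof -
    fix i assume i: "i < m"
    have "val v i (A v i) - q v i \<ge> (1 / real m) * (\<Sum>j<m. val v i (A v j) - q v j)"
      using propo vI i unfolding proportional_def by blast
    also have "(\<Sum>j<m. val v i (A v j) - q v j) = val v i {..<n} - Q"
      unfolding Q_def by (simp add: sum_subtractf part)
    finally show "val v i (A v i) - q v i \<ge> (1 / real m) * (val v i {..<n} - Q)" .
  qed
  have "(\<Sum>i<m. (1 / real m) * (val v i {..<n} - Q)) \<le> (\<Sum>i<m. val v i (A v i) - q v i)"
    using ineq by (intro sum_mono) auto
  hence "(1 / real m) * ((\<Sum>i<m. val v i {..<n}) - real m * Q) \<le> (\<Sum>i<m. val v i (A v i)) - Q"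
  proof -
    assume h: "(\<Sum>i<m. (1 / real m) * (val v i {..<n} - Q)) \<le> (\<Sum>i<m. val v i (A v i) - q v i)"
    have "(\<Sum>i<m. (1 / real m) * (val v i {..<n} - Q)) = (1 / real m) * ((\<Sum>i<m. val v i {..<n}) - real m * Q)"
      by (simp only: sum_distrib_left[symmetric] sum_subtractf sum_constant card_lessThan)
    moreover have "(\<Sum>i<m. val v i (A v i) - q v i) = (\<Sum>i<m. val v i (A v i)) - Q"
      by (simp add: sum_subtractf Q_def)
    ultimately show ?thesis using h by simp
  qed
  hence "(1 / real m) * (1 + L + real (m - 1)) - Q \<le> (\<Sum>i<m. val v i (A v i)) - Q"
    using m1 totn by (simp add: right_diff_distrib)
  hence "(1 / real m) * (1 + L + real (m - 1)) \<le> real m" using upper by linarith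
  moreover have "(1 / real m) * (1 + L + real (m - 1)) = real m + 1"
    using m1 unfolding L_def by (simp add: of_nat_diff field_simps)
  ultimately show False by simp
qed

end
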